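(* Let $c_1,c_2>0$ be constants and let $G$ be a $(2n,d,b)$-clustered regular graph with $\frac bd\le c_1n^{-1/2}$ and $\lambda\le c_2n^{-1/4}$. Let $c\in\mathbb N$ be any constant. Consider the 2-Choices dynamics on $G$ started from a configuration $\mathbf c^{(t)}$ such that $|s^{(t)}_i|\ge n-\log n$ for each $i\in\{1,2\}$. Then, with high probability, for the next $n^c$ rounds the process lies in the set of configurations such that $|s_i|\ge n-\mathcal{O}\big(\frac{\log n}{\log\log n}\big)$ for each $i\in\{1,2\}$, and the sign of each bias is preserved.
   Context: A $(2n,d,b)$-clustered regular graph is a graph $G=(V,E)$ with $V=V_1\cup V_2$ disjoint, $|V_1|=|V_2|=n$, every node of degree $d$, every node of $V_1$ having exactly $b$ neighbors in $V_2$ and vice versa; each $V_i$ induces a $(d-b)$-regular graph, assumed connected and non-bipartite. $\lambda:=\max(|\lambda_2|,|\lambda_n|,|\mu_2|,|\mu_n|)$, where $\lambda_1\ge\dots\ge\lambda_n$ and $\mu_1\ge\dots\ge\mu_n$ are the eigenvalues of the simple random walk transition matrices of the subgraphs induced by $V_1$ and $V_2$. $s^{(t)}_i$ is the number of red minus the number of blue nodes in $V_i$ at time $t$. 2-Choices dynamics: in each synchronous round every node independently samples two neighbors uniformly at random with replacement and, if both have the same color, adopts it; otherwise it keeps its color. "With high probability" means with probability at least $1-\mathcal{O}(n^{-\gamma})$ for some constant $\gamma>0$; asymptotic notation refers to $n\to\infty$. *)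

theory Defs
  imports "HOL-Probability.Product_PMF" "Jordan_Normal_Form.Char_Poly"
begin

definition cluster :: "nat \<Rightarrow> nat \<Rightarrow> nat set" where
  "cluster n i = (if i = 1 then {0..<n} else {n..<2*n})"

definition connected_on :: "nat set \<Rightarrow> (nat \<Rightarrow> nat \<Rightarrow> bool) \<Rightarrow> bool" where
  "connected_on S E \<longleftrightarrow>
     (\<forall>u\<in>S. \<forall>v\<in>S. (\<lambda>x y. x \<in> S \<and> y \<in> S \<and> E x y)\<^sup>*\<^sup>* u v)"

definition bipartite_on :: "nat set \<Rightarrow> (nat \<Rightarrow> nat \<Rightarrow> bool) \<Rightarrow> bool" where
  "bipartite_on S E \<longleftrightarrow> (\<exists>f :: nat \<Rightarrow> bool. \<forall>u\<in>S. \<forall>v\<in>S. E u v \<longrightarrow> f u \<noteq> f v)"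

definition clustered_regular :: "nat \<Rightarrow> nat \<Rightarrow> nat \<Rightarrow> (nat \<Rightarrow> nat \<Rightarrow> bool) \<Rightarrow> bool" where
  "clustered_regular n d b E \<longleftrightarrow>
     0 < n \<and>
     (\<forall>u v. E u v \<longrightarrow> u < 2*n \<and> v < 2*n) \<and>
     (\<forall>u v. E u v \<longrightarrow> E v u) \<and>
     (\<forall>u. \<not> E u u) \<and>
     (\<forall>v < 2*n. card {u. E v u} = d) \<and>
     (\<forall>v \<in> cluster n 1. card {u \<in> cluster n 2. E v u} = b) \<and>
     (\<forall>v \<in> cluster n 2. card {u \<in> cluster n 1. E v u} = b) \<and>
     (\<forall>i \<in> {1,2}. connected_on (cluster n i) E \<and> \<not> bipartite_on (cluster n i) E)"

text \<open>Transition matrix of the simple random walk on the subgraph induced by V_i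
  (which is (d-b)-regular), indexed by 0..<n via the offset of the cluster.\<close>

definition walk_matrix :: "nat \<Rightarrow> nat \<Rightarrow> nat \<Rightarrow> (nat \<Rightarrow> nat \<Rightarrow> bool) \<Rightarrow> nat \<Rightarrow> real mat" where
  "walk_matrix n d b E i =
     (let off = (if i = 1 then 0 else n) in
      mat n n (\<lambda>(j,k). if E (off + j) (off + k) then 1 / real (d - b) else 0))"

text \<open>Eigenvalues (with multiplicity) in non-increasing order:
  lambda_1 \<ge> ... \<ge> lambda_n. The matrix is symmetric, so the
  characteristic polynomial splits over the reals.\<close>

definition eigenvalues_desc :: "real mat \<Rightarrow> real list" where
  "eigenvalues_desc A = rev (sorted_list_of_multiset (proots (char_poly A)))"

definition lambda_param :: "nat \<Rightarrow> nat \<Rightarrow> nat \<Rightarrow> (nat \<Rightarrow> nat \<Rightarrow> bool) \<Rightarrow> real" where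
  "lambda_param n d b E =
     Max {\<bar>eigenvalues_desc (walk_matrix n d b E i) ! k\<bar> | i k. i \<in> {1,2} \<and> k \<in> {1, n - 1}}"

text \<open>Configurations: True = red, False = blue.\<close>

definition bias :: "nat set \<Rightarrow> (nat \<Rightarrow> bool) \<Rightarrow> real" where
  "bias S x = real (card {v \<in> S. x v}) - real (card {v \<in> S. \<not> x v})"

definition node_update :: "(nat \<Rightarrow> nat \<Rightarrow> bool) \<Rightarrow> (nat \<Rightarrow> bool) \<Rightarrow> nat \<Rightarrow> bool pmf" where
  "node_update E x v =
     bind_pmf (pmf_of_set {u. E v u}) (\<lambda>u1.
     bind_pmf (pmf_of_set {u. E v u}) (\<lambda>u2.
     return_pmf (if x u1 = x u2 then x u1 else x v)))"

definition two_choices_step :: "nat \<Rightarrow> (nat \<Rightarrow> nat \<Rightarrow> bool) \<Rightarrow> (nat \<Rightarrow> bool) \<Rightarrow> (nat \<Rightarrow> bool) pmf" where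
  "two_choices_step n E x = Pi_pmf {0..<2*n} False (node_update E x)"

text \<open>run n E T x: distribution of the list of the next T configurations
  [x^(1), ..., x^(T)] starting from x = x^(0).\<close>

fun two_choices_run :: "nat \<Rightarrow> (nat \<Rightarrow> nat \<Rightarrow> bool) \<Rightarrow> nat \<Rightarrow> (nat \<Rightarrow> bool) \<Rightarrow> (nat \<Rightarrow> bool) list pmf" where
  "two_choices_run n E 0 x = return_pmf []"
| "two_choices_run n E (Suc T) x =
     bind_pmf (two_choices_step n E x) (\<lambda>y. map_pmf (Cons y) (two_choices_run n E T y))"

end

theory Submission
  imports Defs "Jordan_Normal_Form.Schur_Decomposition" "HOL-Real_Asymp.Real_Asymp"
begin

lemma sym_eig_real:
  fixes A :: "real mat" and a :: complex
  assumes A: "A \<in> carrier_mat n n"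
    and sym: "\<And>i j. i < n \<Longrightarrow> j < n \<Longrightarrow> A $$ (i,j) = A $$ (j,i)"
    and root: "poly (char_poly (map_mat complex_of_real A)) a = 0"
  shows "a = complex_of_real (Re a)"
proof -
  let ?C = "map_mat complex_of_real A"
  have C: "?C \<in> carrier_mat n n" using A by simp
  from root eigenvalue_root_char_poly[OF C] have "eigenvalue ?C a" by simp
  then obtain v where v: "v \<in> carrier_vec n" "v \<noteq> 0\<^sub>v n" "?C *\<^sub>v v = a \<cdot>\<^sub>v v"
    unfolding eigenvalue_def eigenvector_def using C by auto
  have ev: "(\<Sum>j<n. complex_of_real (A $$ (i,j)) * v $ j) = a * v $ i" if "i < n" for i
  proof -
    have "(?C *\<^sub>v v) $ i = (a \<cdot>\<^sub>v v) $ i" using v(3) by simp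
    thus ?thesis using that A v(1) by (simp add: scalar_prod_def lessThan_atLeast0)
  qed
  define S where "S = (\<Sum>i<n. cnj (v $ i) * (\<Sum>j<n. complex_of_real (A $$ (i,j)) * v $ j))"
  have S1: "S = a * (\<Sum>i<n. complex_of_real ((cmod (v $ i))^2))"
  proof -
    have "S = (\<Sum>i<n. cnj (v $ i) * (a * v $ i))" unfolding S_def by (intro sum.cong refl) (simp add: ev)
    also have "\<dots> = a * (\<Sum>i<n. v $ i * cnj (v $ i))" by (simp add: sum_distrib_left algebra_simps)
    finally show ?thesis by (simp only: complex_norm_square)
  qed
  have "cnj S = (\<Sum>i<n. \<Sum>j<n. v $ i * (complex_of_real (A $$ (i,j)) * cnj (v $ j)))"
    unfolding S_def by (simp add: sum_distrib_left)
  also have "\<dots> = (\<Sum>j<n. \<Sum>i<n. v $ i * (complex_of_real (A $$ (i,j)) * cnj (v $ j)))"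
    by (rule sum.swap)
  also have "\<dots> = S" unfolding S_def
    by (auto simp: sum_distrib_left sym intro!: sum.cong)
  finally have Sr: "cnj S = S" .
  define N where "N = (\<Sum>i<n. (cmod (v $ i))^2)"
  have "N > 0"
  proof -
    obtain i where i: "i < n" "v $ i \<noteq> 0" using v(1,2) by (metis vec_eq_iff carrier_vecD index_zero_vec(1,2))
    have "(cmod (v $ i))^2 \<le> N" unfolding N_def using i by (intro member_le_sum) auto
    moreover have "(cmod (v $ i))^2 > 0" using i by simp
    ultimately show ?thesis by linarith
  qed
  have "S = a * complex_of_real N" unfolding S1 N_def by simp
  with Sr have "cnj a * complex_of_real N = a * complex_of_real N" by (metis complex_cnj_complex_of_real complex_cnj_mult)
  with \<open>N > 0\<close> have "cnj a = a" by simp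
  thus ?thesis by (auto simp: complex_eq_iff)
qed

lemma map_poly_of_real_prod_lin:
  "map_poly complex_of_real (\<Prod>r\<leftarrow>rs. [:- r, 1:]) = (\<Prod>r\<leftarrow>rs. [:- complex_of_real r, 1:])"
proof -
  interpret mh: map_poly_inj_idom_hom "of_real :: real \<Rightarrow> complex" ..
  show ?thesis
  proof (induction rs)
    case (Cons a rs)
    have "map_poly complex_of_real (\<Prod>r\<leftarrow>a # rs. [:- r, 1:]) =
      map_poly complex_of_real [:- a, 1:] * map_poly complex_of_real (\<Prod>r\<leftarrow>rs. [:- r, 1:])"
      by (simp only: list.map prod_list.Cons mh.hom_mult)
    also have "map_poly complex_of_real [:- a, 1:] = [:- complex_of_real a, 1:]" by simp
    finally show ?case using Cons by simp
  qed simp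
qed

lemma sym_char_poly_split:
  fixes A :: "real mat"
  assumes A: "A \<in> carrier_mat n n"
    and sym: "\<And>i j. i < n \<Longrightarrow> j < n \<Longrightarrow> A $$ (i,j) = A $$ (j,i)"
  shows "\<exists>rs. char_poly A = (\<Prod>r\<leftarrow>rs. [:- r, 1:]) \<and> length rs = n"
proof -
  let ?C = "map_mat complex_of_real A"
  have C: "?C \<in> carrier_mat n n" using A by simp
  from char_poly_factorized[OF C] obtain as where
    as: "char_poly ?C = (\<Prod>a\<leftarrow>as. [:- a, 1:])" "length as = n" by auto
  have real: "a = complex_of_real (Re a)" if "a \<in> set as" for a
  proof (rule sym_eig_real[OF A sym])
    show "poly (char_poly ?C) a = 0" unfolding as(1) using that
      by (simp add: poly_prod_list prod_list_zero_iff)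
  qed
  define rs where "rs = map Re as"
  have "map (\<lambda>r. [:- complex_of_real r, 1:]) rs = map (\<lambda>a. [:- a, 1:]) as"
    unfolding rs_def using real by (auto intro!: map_cong)
  hence "map_poly complex_of_real (\<Prod>r\<leftarrow>rs. [:- r, 1:]) = char_poly ?C"
    unfolding map_poly_of_real_prod_lin as(1) by (metis map_map comp_def)
  also have "char_poly ?C = map_poly complex_of_real (char_poly A)"
    by (rule of_real_hom.char_poly_hom[OF A])
  finally have "map_poly complex_of_real (\<Prod>r\<leftarrow>rs. [:- r, 1:]) = map_poly complex_of_real (char_poly A)" .
  hence "char_poly A = (\<Prod>r\<leftarrow>rs. [:- r, 1:])"
  proof -
    interpret mh: map_poly_inj_idom_hom "of_real :: real \<Rightarrow> complex" ..
    show ?thesis using \<open>map_poly complex_of_real (\<Prod>r\<leftarrow>rs. [:- r, 1:]) = map_poly complex_of_real (char_poly A)\<close> by (metis mh.injectivity)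
  qed
  thus ?thesis using as(2) unfolding rs_def by (intro exI[of _ "map Re as"]) simp
qed

lemma eig_desc_split:
  assumes "char_poly A = (\<Prod>r\<leftarrow>rs. [:- r, 1:])"
  shows "eigenvalues_desc A = rev (sort rs)"
proof -
  have "proots (char_poly A) = mset rs"
    unfolding assms
  proof (induction rs)
    case (Cons a rs)
    have nz: "(\<Prod>r\<leftarrow>rs. [:- r, 1:]) \<noteq> (0::real poly)" by (auto simp: prod_list_zero_iff)
    have "proots (\<Prod>r\<leftarrow>a # rs. [:- r, 1:]) = proots [:- a, 1:] + proots (\<Prod>r\<leftarrow>rs. [:- r, 1:])"
      by (simp only: list.map prod_list.Cons, rule proots_mult) (use nz in auto)
    thus ?case using Cons by simp
  qed simp
  thus ?thesis unfolding eigenvalues_desc_def by (simp add: sorted_list_of_multiset_mset)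
qed

definition trm :: "nat \<Rightarrow> real mat \<Rightarrow> real" where
  "trm n M = (\<Sum>i<n. M $$ (i,i))"

lemma trm_comm:
  assumes "X \<in> carrier_mat n n" "Y \<in> carrier_mat n n"
  shows "trm n (X * Y) = trm n (Y * X)"
proof -
  have "trm n (X * Y) = (\<Sum>i<n. \<Sum>k<n. X $$ (i,k) * Y $$ (k,i))"
    unfolding trm_def using assms by (intro sum.cong refl) (simp add: scalar_prod_def lessThan_atLeast0)
  also have "\<dots> = (\<Sum>k<n. \<Sum>i<n. Y $$ (k,i) * X $$ (i,k))"
    by (subst sum.swap) (simp add: mult.commute)
  also have "\<dots> = trm n (Y * X)"
    unfolding trm_def using assms by (intro sum.cong refl) (simp add: scalar_prod_def lessThan_atLeast0)
  finally show ?thesis .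
qed

lemma trm_sq:
  assumes "X \<in> carrier_mat n n"
  shows "trm n (X * X) = (\<Sum>i<n. \<Sum>k<n. X $$ (i,k) * X $$ (k,i))"
  unfolding trm_def using assms by (intro sum.cong refl) (simp add: scalar_prod_def lessThan_atLeast0)

lemma trm_upper_sq:
  assumes "B \<in> carrier_mat n n" "upper_triangular B"
  shows "trm n (B * B) = (\<Sum>i<n. (B $$ (i,i))^2)"
proof -
  have "trm n (B * B) = (\<Sum>i<n. \<Sum>k<n. B $$ (i,k) * B $$ (k,i))" by (rule trm_sq[OF assms(1)])
  also have "\<dots> = (\<Sum>i<n. \<Sum>k<n. if k = i then (B $$ (i,i))^2 else 0)"
  proof (intro sum.cong refl)
    fix i k assume "i \<in> {..<n}" "k \<in> {..<n}"
    thus "B $$ (i,k) * B $$ (k,i) = (if k = i then (B $$ (i,i))^2 else 0)"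
    proof (cases "k < i")
      case True thus ?thesis using assms \<open>i \<in> {..<n}\<close> unfolding upper_triangular_def by auto
    next
      case False
      show ?thesis
      proof (cases "k = i")
        case True thus ?thesis by (simp add: power2_eq_square)
      next
        case ne: False
        with False have "i < k" by simp
        thus ?thesis using assms \<open>k \<in> {..<n}\<close> ne unfolding upper_triangular_def by auto
      qed
    qed
  qed
  also have "\<dots> = (\<Sum>i<n. (B $$ (i,i))^2)" by simp
  finally show ?thesis .
qed

lemma sum_sq_eig_trace:
  assumes A: "A \<in> carrier_mat n n" and c: "char_poly A = (\<Prod>r\<leftarrow>rs. [:- r, 1:])"
  shows "(\<Sum>r\<leftarrow>rs. r^2) = trm n (A * A)"
proof -
  obtain B P Q where sd: "schur_decomposition A rs = (B,P,Q)" by (cases "schur_decomposition A rs") auto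
  from schur_decomposition[OF A c sd] have
    sim: "similar_mat_wit A B P Q" and ut: "upper_triangular B" and dg: "diag_mat B = rs" by auto
  from sim A have car: "B \<in> carrier_mat n n" "P \<in> carrier_mat n n" "Q \<in> carrier_mat n n"
    and QP: "Q * P = 1\<^sub>m n" and AP: "A = P * B * Q"
    unfolding similar_mat_wit_def Let_def by auto
  have BB: "B * B \<in> carrier_mat n n" using car by simp
  have "A * A = P * (B * B) * Q"
  proof -
    have "A * A = P * B * Q * (P * B * Q)" using AP by simp
    also have "\<dots> = P * (B * (Q * P) * B) * Q" using car
      by (simp add: assoc_mult_mat[of _ n n _ n _ n])
    also have "\<dots> = P * (B * B) * Q" using car QP by simp
    finally show ?thesis .
  qed
  hence "trm n (A * A) = trm n (P * ((B * B) * Q))" using car by (simp add: assoc_mult_mat[of _ n n _ n _ n])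
  also have "\<dots> = trm n ((B * B) * Q * P)" using car by (subst trm_comm[of _ n]) auto
  also have "\<dots> = trm n (B * B)" using car QP by (simp add: assoc_mult_mat[of _ n n _ n _ n])
  also have "\<dots> = (\<Sum>i<n. (B $$ (i,i))^2)" by (rule trm_upper_sq[OF car(1) ut])
  also have "\<dots> = (\<Sum>r\<leftarrow>rs. r^2)" unfolding dg[symmetric] diag_mat_def using car
    by (simp add: sum_list_distinct_conv_sum_set lessThan_atLeast0 comp_def)
  finally show ?thesis by simp
qed

lemma eig_abs_le_1:
  fixes A :: "real mat"
  assumes A: "A \<in> carrier_mat n n"
    and nonneg: "\<And>j k. j < n \<Longrightarrow> k < n \<Longrightarrow> A $$ (j,k) \<ge> 0"
    and rows: "\<And>j. j < n \<Longrightarrow> (\<Sum>k<n. A $$ (j,k)) \<le> 1"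
    and root: "poly (char_poly A) e = 0"
  shows "\<bar>e\<bar> \<le> 1"
proof -
  from root eigenvalue_root_char_poly[OF A] have "eigenvalue A e" by simp
  then obtain v where v: "v \<in> carrier_vec n" "v \<noteq> 0\<^sub>v n" "A *\<^sub>v v = e \<cdot>\<^sub>v v"
    unfolding eigenvalue_def eigenvector_def using A by auto
  obtain i0 where i0: "i0 < n" "v $ i0 \<noteq> 0" using v(1,2) by (metis vec_eq_iff carrier_vecD index_zero_vec(1,2))
  have fin: "finite ((\<lambda>k. \<bar>v $ k\<bar>) ` {..<n})" by simp
  have ne: "(\<lambda>k. \<bar>v $ k\<bar>) ` {..<n} \<noteq> {}" using i0 by auto
  obtain i where i: "i < n" "\<bar>v $ i\<bar> = Max ((\<lambda>k. \<bar>v $ k\<bar>) ` {..<n})"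
    using Max_in[OF fin ne] by auto
  have maxi: "\<bar>v $ k\<bar> \<le> \<bar>v $ i\<bar>" if "k < n" for k using i(2) Max_ge[OF fin] that by auto
  have pos: "\<bar>v $ i\<bar> > 0" using maxi[OF i0(1)] i0(2) by linarith
  have "e * v $ i = (\<Sum>k<n. A $$ (i,k) * v $ k)"
  proof -
    have "(A *\<^sub>v v) $ i = (e \<cdot>\<^sub>v v) $ i" using v(3) by simp
    thus ?thesis using i A v(1) by (simp add: scalar_prod_def lessThan_atLeast0)
  qed
  hence "\<bar>e\<bar> * \<bar>v $ i\<bar> = \<bar>\<Sum>k<n. A $$ (i,k) * v $ k\<bar>" by (metis abs_mult)
  also have "\<dots> \<le> (\<Sum>k<n. A $$ (i,k) * \<bar>v $ i\<bar>)"
  proof -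
    have "\<bar>\<Sum>k<n. A $$ (i,k) * v $ k\<bar> \<le> (\<Sum>k<n. \<bar>A $$ (i,k) * v $ k\<bar>)" by (rule sum_abs)
    also have "\<dots> \<le> (\<Sum>k<n. A $$ (i,k) * \<bar>v $ i\<bar>)"
    proof (intro sum_mono)
      fix k assume "k \<in> {..<n}"
      thus "\<bar>A $$ (i,k) * v $ k\<bar> \<le> A $$ (i,k) * \<bar>v $ i\<bar>"
        using nonneg[OF i(1), of k] maxi[of k] by (simp add: abs_mult mult_left_mono)
    qed
    finally show ?thesis .
  qed
  also have "\<dots> = (\<Sum>k<n. A $$ (i,k)) * \<bar>v $ i\<bar>" by (simp add: sum_distrib_right)
  also have "\<dots> \<le> 1 * \<bar>v $ i\<bar>" using rows[OF i(1)] pos by (intro mult_right_mono) auto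
  finally show ?thesis using pos by simp
qed

lemma spectral_degree_bound:
  fixes n d' :: nat and E' :: "nat \<Rightarrow> nat \<Rightarrow> bool" and lam :: real
  assumes n2: "n \<ge> 2" and d1: "d' \<ge> 1"
    and sym: "\<And>j k. j < n \<Longrightarrow> k < n \<Longrightarrow> E' j k = E' k j"
    and deg: "\<And>j. j < n \<Longrightarrow> card {k. k < n \<and> E' j k} = d'"
    and Adef: "A = mat n n (\<lambda>(j,k). if E' j k then 1 / real d' else 0)"
    and l1: "\<bar>eigenvalues_desc A ! 1\<bar> \<le> lam"
    and l2: "\<bar>eigenvalues_desc A ! (n - 1)\<bar> \<le> lam"
  shows "real n / real d' \<le> 1 + real (n - 1) * lam^2"
proof -
  have A: "A \<in> carrier_mat n n" unfolding Adef by simp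
  have Asym: "A $$ (i,j) = A $$ (j,i)" if "i < n" "j < n" for i j
    using that sym unfolding Adef by auto
  obtain rs where rs: "char_poly A = (\<Prod>r\<leftarrow>rs. [:- r, 1:])" "length rs = n"
    using sym_char_poly_split[OF A Asym] by blast
  define es where "es = eigenvalues_desc A"
  have es: "es = rev (sort rs)" unfolding es_def by (rule eig_desc_split[OF rs(1)])
  have les: "length es = n" using es rs(2) by simp
  have sumeq: "(\<Sum>r\<leftarrow>es. r^2) = (\<Sum>r\<leftarrow>rs. r^2)"
  proof -
    have "mset (rev (sort rs)) = mset rs" by simp
    hence "image_mset (\<lambda>r. r^2) (mset (rev (sort rs))) = image_mset (\<lambda>r. r^2) (mset rs)" by simp
    hence "sum_mset (mset (map (\<lambda>r. r^2) (rev (sort rs)))) = sum_mset (mset (map (\<lambda>r. r^2) rs))"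
      by (simp only: mset_map)
    thus ?thesis unfolding es by (simp only: sum_mset_sum_list)
  qed
  have tr: "trm n (A * A) = real n / real d'"
  proof -
    have "trm n (A * A) = (\<Sum>i<n. \<Sum>k<n. A $$ (i,k) * A $$ (k,i))" by (rule trm_sq[OF A])
    also have "\<dots> = (\<Sum>i<n. \<Sum>k\<in>{k. k < n \<and> E' i k}. 1 / (real d')^2)"
    proof (rule sum.cong[OF refl])
      fix i assume i: "i \<in> {..<n}"
      have "(\<Sum>k<n. A $$ (i,k) * A $$ (k,i)) = (\<Sum>k<n. if E' i k then 1 / (real d')^2 else 0)"
        using i sym unfolding Adef by (intro sum.cong refl) (auto simp: power2_eq_square)
      also have "\<dots> = (\<Sum>k\<in>{k. k < n \<and> E' i k}. 1 / (real d')^2)"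
        by (simp add: sum.If_cases lessThan_def Collect_conj_eq Int_commute)
      finally show "(\<Sum>k<n. A $$ (i,k) * A $$ (k,i)) = (\<Sum>k\<in>{k. k < n \<and> E' i k}. 1 / (real d')^2)" .
    qed
    also have "\<dots> = (\<Sum>i<n. real d' / (real d')^2)" using deg by simp
    also have "\<dots> = real n / real d'" using d1 by (simp add: power2_eq_square)
    finally show ?thesis .
  qed
  have sq: "(\<Sum>r\<leftarrow>es. r^2) = real n / real d'"
    using sumeq sum_sq_eig_trace[OF A rs(1)] tr by simp
  have sorted: "sorted (sort rs)" by simp
  have mono: "es ! j \<le> es ! i" if "i \<le> j" "j < n" for i j
  proof -
    have "es ! j = sort rs ! (n - Suc j)" "es ! i = sort rs ! (n - Suc i)"
      using that rs(2) unfolding es by (simp_all add: rev_nth)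
    thus ?thesis using sorted_nth_mono[OF sorted, of "n - Suc j" "n - Suc i"] that rs(2) by simp
  qed
  have mid: "(es ! k)^2 \<le> lam^2" if "1 \<le> k" "k < n" for k
  proof -
    have "es ! k \<le> es ! 1" using mono[of 1 k] that by simp
    moreover have "es ! (n - 1) \<le> es ! k" using mono[of k "n - 1"] that by simp
    ultimately have "\<bar>es ! k\<bar> \<le> lam" using l1 l2 unfolding es_def by linarith
    hence "\<bar>es ! k\<bar> \<le> \<bar>lam\<bar>" by linarith
    thus ?thesis by (simp add: abs_le_square_iff)
  qed
  have e0: "(es ! 0)^2 \<le> 1"
  proof -
    have "0 < length es" using les n2 by simp
    hence "es ! 0 \<in> set es" by (rule nth_mem)
    hence "es ! 0 \<in> set rs" unfolding es by simp
    hence "poly (char_poly A) (es ! 0) = 0" unfolding rs(1) by (simp add: poly_prod_list prod_list_zero_iff)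
    hence "\<bar>es ! 0\<bar> \<le> 1"
    proof (rule eig_abs_le_1[OF A, rotated 2])
      show "A $$ (j,k) \<ge> 0" if "j < n" "k < n" for j k using that unfolding Adef by auto
      show "(\<Sum>k<n. A $$ (j,k)) \<le> 1" if "j < n" for j
      proof -
        have "(\<Sum>k<n. A $$ (j,k)) = (\<Sum>k<n. if E' j k then 1 / real d' else 0)"
          using that unfolding Adef by (intro sum.cong refl) auto
        also have "\<dots> = (\<Sum>k\<in>{k. k < n \<and> E' j k}. 1 / real d')"
          by (simp add: sum.If_cases lessThan_def Collect_conj_eq Int_commute)
        also have "\<dots> = 1" using deg[OF that] d1 by simp
        finally show ?thesis by simp
      qed
    qed
    thus ?thesis using abs_le_square_iff[of "es ! 0" 1] by simp
  qed
  have "(\<Sum>r\<leftarrow>es. r^2) = (\<Sum>k<n. (es ! k)^2)"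
    using les by (simp add: sum_list_sum_nth lessThan_atLeast0)
  also have "\<dots> = (es ! 0)^2 + (\<Sum>k\<in>{1..<n}. (es ! k)^2)"
    using n2 by (simp add: lessThan_atLeast0 sum.atLeast_Suc_lessThan)
  also have "\<dots> \<le> 1 + (\<Sum>k\<in>{1..<n}. lam^2)"
    using e0 mid by (intro add_mono sum_mono) auto
  also have "\<dots> = 1 + real (n - 1) * lam^2" by simp
  finally show ?thesis using sq by simp
qed

lemma run_bound:
  fixes A B :: "(nat \<Rightarrow> bool) set" and p :: real
  assumes BA: "B \<subseteq> A" and p0: "p \<ge> 0"
    and step: "\<And>x. x \<in> A \<Longrightarrow> measure_pmf.prob (two_choices_step n E x) (- B) \<le> p"
  shows "x \<in> A \<Longrightarrow> measure_pmf.prob (two_choices_run n E T x) {xs. \<exists>y\<in>set xs. y \<notin> B} \<le> real T * p"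
proof (induction T arbitrary: x)
  case 0
  thus ?case by simp
next
  case (Suc T)
  let ?Bad = "{xs. \<exists>y\<in>set xs. y \<notin> B}"
  have "emeasure (measure_pmf (two_choices_run n E (Suc T) x)) ?Bad =
        (\<integral>\<^sup>+y. emeasure (measure_pmf (map_pmf (Cons y) (two_choices_run n E T y))) ?Bad \<partial>measure_pmf (two_choices_step n E x))"
    by simp
  also have "\<dots> \<le> (\<integral>\<^sup>+y. (indicator (- B) y + ennreal (real T * p)) \<partial>measure_pmf (two_choices_step n E x))"
  proof (intro nn_integral_mono)
    fix y
    show "emeasure (measure_pmf (map_pmf (Cons y) (two_choices_run n E T y))) ?Bad \<le> indicator (- B) y + ennreal (real T * p)"
    proof (cases "y \<in> B")
      case True
      have "emeasure (measure_pmf (map_pmf (Cons y) (two_choices_run n E T y))) ?Bad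
            = emeasure (measure_pmf (two_choices_run n E T y)) ?Bad"
        using True by (simp add: vimage_def)
      also have "\<dots> = ennreal (measure_pmf.prob (two_choices_run n E T y) ?Bad)"
        by (simp add: measure_pmf.emeasure_eq_measure)
      also have "\<dots> \<le> ennreal (real T * p)" using Suc.IH[of y] True BA by (intro ennreal_leI) auto
      finally show ?thesis by (simp add: True)
    next
      case False
      have "emeasure (measure_pmf (map_pmf (Cons y) (two_choices_run n E T y))) ?Bad \<le> 1"
        by (simp add: measure_pmf.emeasure_le_1)
      thus ?thesis using False by (simp add: add_increasing2)
    qed
  qed
  also have "\<dots> = emeasure (measure_pmf (two_choices_step n E x)) (- B) + ennreal (real T * p)"
    by (simp add: nn_integral_add measure_pmf.emeasure_space_1)
  also have "\<dots> = ennreal (measure_pmf.prob (two_choices_step n E x) (- B) + real T * p)"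
    using p0 by (simp add: measure_pmf.emeasure_eq_measure ennreal_plus)
  also have "\<dots> \<le> ennreal (real (Suc T) * p)"
    using step[OF Suc.prems] by (intro ennreal_leI) (simp add: algebra_simps)
  finally show ?case
    using p0 by (simp add: measure_pmf.emeasure_eq_measure)
qed

lemma node_update_bad:
  assumes fin: "finite {u. E v u}" and dpos: "card {u. E v u} > 0"
  shows "pmf (node_update E x v) (\<not> R) \<le>
    (real (card {u. E v u \<and> x u \<noteq> R}) / real (card {u. E v u}))^2 +
    (if x v \<noteq> R then 2 * real (card {u. E v u \<and> x u \<noteq> R}) / real (card {u. E v u}) else 0)"
proof -
  define N where "N = {u. E v u}"
  define d where "d = real (card N)"
  define F where "F = real (card {u. E v u \<and> x u \<noteq> R})"
  define g where "g u1 u2 = (if x u1 = x u2 then x u1 else x v)" for u1 u2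
  define b where "b u = (if x u \<noteq> R then 1 else 0 :: real)" for u
  define c where "c = (if x v \<noteq> R then 1 else 0 :: real)"
  have Nne: "N \<noteq> {}" using dpos unfolding N_def by (metis card.empty less_irrefl)
  have finN: "finite N" using fin unfolding N_def by simp
  have dpos': "d > 0" using dpos unfolding d_def N_def by simp
  have "pmf (node_update E x v) (\<not> R) = (\<Sum>u1\<in>N. \<Sum>u2\<in>N. indicator {\<not> R} (g u1 u2)) / d^2"
    unfolding node_update_def pmf_bind N_def[symmetric] g_def d_def
    using Nne finN by (simp add: integral_pmf_of_set pmf_return sum_divide_distrib power2_eq_square)
  also have "\<dots> \<le> (\<Sum>u1\<in>N. \<Sum>u2\<in>N. b u1 * b u2 + c * (b u1 + b u2)) / d^2"
  proof (intro divide_right_mono sum_mono)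
    fix u1 u2
    show "indicator {\<not> R} (g u1 u2) \<le> b u1 * b u2 + c * (b u1 + b u2)"
      unfolding g_def b_def c_def by (cases "x u1"; cases "x u2"; cases "x v"; cases R) auto
  qed simp
  also have "(\<Sum>u1\<in>N. \<Sum>u2\<in>N. b u1 * b u2 + c * (b u1 + b u2)) =
      (\<Sum>u\<in>N. b u)^2 + c * (2 * d * (\<Sum>u\<in>N. b u))"
    by (simp add: sum.distrib sum_distrib_left sum_distrib_right power2_eq_square d_def algebra_simps)
  also have "(\<Sum>u\<in>N. b u) = F"
    unfolding b_def F_def N_def using fin by (simp add: sum.If_cases Int_def)
  finally have "pmf (node_update E x v) (\<not> R) \<le> (F^2 + c * (2 * d * F)) / d^2" .
  also have "\<dots> = (F / d)^2 + c * (2 * F / d)" using dpos' by (simp add: field_simps power2_eq_square)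
  finally show ?thesis unfolding F_def d_def N_def c_def by (cases "x v = R") auto
qed

lemma expect_bool_pmf:
  fixes M :: "bool pmf" and f :: "bool \<Rightarrow> real"
  shows "measure_pmf.expectation M f = f True * pmf M True + f False * pmf M False"
  by (subst integral_measure_pmf_real[where A = UNIV]) (auto simp: UNIV_bool)

lemma pmf_bool_sum: "pmf (M :: bool pmf) True + pmf M False = 1"
proof -
  have "(\<Sum>a\<in>UNIV. pmf M a) = 1" by (rule sum_pmf_eq_1) auto
  thus ?thesis by (simp add: UNIV_bool add.commute)
qed

lemma chernoff_count:
  fixes V I :: "nat set" and p :: "nat \<Rightarrow> bool pmf" and R :: bool and t thr :: real
  assumes finI: "finite I" and VI: "V \<subseteq> I" and t1: "t > 1"
  shows "measure_pmf.prob (Pi_pmf I False p) {y. real (card {v\<in>V. y v \<noteq> R}) > thr}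
     \<le> exp ((t - 1) * (\<Sum>v\<in>V. pmf (p v) (\<not> R))) / t powr thr"
proof -
  define f where "f v b = (if v \<in> V \<and> b \<noteq> R then t else 1)" for v b
  define X where "X y = (\<Prod>v\<in>I. f v (y v))" for y :: "nat \<Rightarrow> bool"
  have finV: "finite V" using finI VI finite_subset by blast
  have X: "X y = t ^ card {v\<in>V. y v \<noteq> R}" for y
  proof -
    have "X y = (\<Prod>v\<in>{v\<in>I. v \<in> V \<and> y v \<noteq> R}. t)"
      unfolding X_def f_def by (rule prod.inter_filter[OF finI, symmetric])
    also have "{v\<in>I. v \<in> V \<and> y v \<noteq> R} = {v\<in>V. y v \<noteq> R}" using VI by auto
    finally show ?thesis by simp
  qed
  have Xnn: "X y \<ge> 0" for y unfolding X using t1 by simp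
  have Xbd: "X y \<le> t ^ card I" for y
  proof -
    have "card {v\<in>V. y v \<noteq> R} \<le> card I" using VI finI by (intro card_mono) auto
    thus ?thesis unfolding X using t1 by (intro power_increasing) auto
  qed
  have intX: "integrable (measure_pmf (Pi_pmf I False p)) X"
    by (rule measure_pmf.integrable_const_bound[where B = "t ^ card I"]) (use Xnn Xbd in auto)
  have cpos: "t powr thr > 0" using t1 by simp
  have sub: "{y. real (card {v\<in>V. y v \<noteq> R}) > thr} \<subseteq> {y \<in> space (measure_pmf (Pi_pmf I False p)). X y \<ge> t powr thr}"
  proof safe
    fix y assume "real (card {v\<in>V. y v \<noteq> R}) > thr"
    hence "t powr thr \<le> t powr real (card {v\<in>V. y v \<noteq> R})" using t1 by (intro powr_mono) auto
    also have "\<dots> = X y" unfolding X using t1 by (simp add: powr_realpow)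
    finally show "t powr thr \<le> X y" .
  qed simp
  have "measure_pmf.prob (Pi_pmf I False p) {y. real (card {v\<in>V. y v \<noteq> R}) > thr}
      \<le> measure_pmf.prob (Pi_pmf I False p) {y \<in> space (measure_pmf (Pi_pmf I False p)). X y \<ge> t powr thr}"
    by (rule measure_pmf.finite_measure_mono[OF sub]) simp
  also have "\<dots> \<le> measure_pmf.expectation (Pi_pmf I False p) X / t powr thr"
    by (rule integral_Markov_inequality_measure[OF intX]) (use Xnn cpos in auto)
  also have "measure_pmf.expectation (Pi_pmf I False p) X = (\<Prod>v\<in>I. measure_pmf.expectation (p v) (f v))"
    unfolding X_def
  proof (rule expectation_prod_Pi_pmf[OF finI])
    fix v assume "v \<in> I"
    show "integrable (measure_pmf (p v)) (f v)"
      by (rule measure_pmf.integrable_const_bound[where B = t]) (use t1 in \<open>auto simp: f_def\<close>)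
  qed (use t1 in \<open>auto simp: f_def\<close>)
  also have "\<dots> = (\<Prod>v\<in>I. if v \<in> V then 1 + (t - 1) * pmf (p v) (\<not> R) else 1)"
  proof (intro prod.cong refl)
    fix v
    have s: "pmf (p v) True + pmf (p v) False = 1" by (rule pmf_bool_sum)
    show "measure_pmf.expectation (p v) (f v) = (if v \<in> V then 1 + (t - 1) * pmf (p v) (\<not> R) else 1)"
      unfolding expect_bool_pmf f_def using s by (cases R) (auto simp: algebra_simps)
  qed
  also have "\<dots> = (\<Prod>v\<in>V. 1 + (t - 1) * pmf (p v) (\<not> R))"
    using finI VI by (simp add: prod.If_cases Int_absorb1)
  also have "\<dots> \<le> (\<Prod>v\<in>V. exp ((t - 1) * pmf (p v) (\<not> R)))"
    by (intro prod_mono conjI) (use t1 in \<open>auto simp: exp_ge_add_one_self\<close>)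
  also have "\<dots> = exp ((t - 1) * (\<Sum>v\<in>V. pmf (p v) (\<not> R)))"
    by (simp add: exp_sum[OF finV] sum_distrib_left)
  finally show ?thesis using cpos by (simp add: divide_right_mono)
qed

lemma cluster_simps:
  "cluster n 1 = {0..<n}" "cluster n 2 = {n..<2*n}"
  by (simp_all add: cluster_def)

lemma cr_basic:
  assumes "clustered_regular n d b E"
  shows "n > 0" "\<And>u v. E u v \<Longrightarrow> u < 2*n \<and> v < 2*n" "\<And>u v. E u v \<Longrightarrow> E v u"
    "\<And>v. v < 2*n \<Longrightarrow> card {u. E v u} = d"
    "\<And>v. v \<in> cluster n 1 \<Longrightarrow> card {u \<in> cluster n 2. E v u} = b"
    "\<And>v. v \<in> cluster n 2 \<Longrightarrow> card {u \<in> cluster n 1. E v u} = b"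
    "\<And>i. i \<in> {1,2} \<Longrightarrow> connected_on (cluster n i) E \<and> \<not> bipartite_on (cluster n i) E"
  using assms unfolding clustered_regular_def by blast+

lemma cr_finite_nbrs:
  assumes "clustered_regular n d b E"
  shows "finite {u. E v u}"
proof -
  have "{u. E v u} \<subseteq> {..<2*n}" using cr_basic(2)[OF assms] by blast
  thus ?thesis using finite_subset by blast
qed

lemma other_cluster:
  assumes "i \<in> {1,2::nat}"
  shows "cluster n i \<inter> cluster n (3 - i) = {}" "cluster n i \<union> cluster n (3 - i) = {..<2*n}"
    "3 - i \<in> {1,2}"
proof -
  from assms have "i = 1 \<or> i = 2" by blast
  thus "cluster n i \<inter> cluster n (3 - i) = {}" "cluster n i \<union> cluster n (3 - i) = {..<2*n}" "3 - i \<in> {1,2}"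
    by (auto simp: cluster_def)
qed

lemma other_b:
  assumes cr: "clustered_regular n d b E" and i: "i \<in> {1,2::nat}" and v: "v \<in> cluster n i"
  shows "card {u \<in> cluster n (3 - i). E v u} = b"
proof -
  from i have "i = 1 \<or> i = 2" by blast
  thus ?thesis
  proof
    assume "i = 1" thus ?thesis using cr_basic(5)[OF cr] v by simp
  next
    assume "i = 2" thus ?thesis using cr_basic(6)[OF cr] v by simp
  qed
qed

lemma cr_own_deg:
  assumes cr: "clustered_regular n d b E" and i: "i \<in> {1,2::nat}" and v: "v \<in> cluster n i"
  shows "card {u \<in> cluster n i. E v u} + b = d"
proof -
  let ?V = "cluster n i" and ?W = "cluster n (3 - i)"
  have vlt: "v < 2*n" using v other_cluster(2)[OF i, of n] by blast
  have un: "{u. E v u} = {u \<in> ?V. E v u} \<union> {u \<in> ?W. E v u}"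
  proof -
    have "{u. E v u} \<subseteq> ?V \<union> ?W" using cr_basic(2)[OF cr] other_cluster(2)[OF i, of n] by blast
    thus ?thesis by blast
  qed
  have dis: "{u \<in> ?V. E v u} \<inter> {u \<in> ?W. E v u} = {}"
    using other_cluster(1)[OF i, of n] by blast
  have fin: "finite {u. E v u}" by (rule cr_finite_nbrs[OF cr])
  have f1: "finite {u \<in> ?V. E v u}" "finite {u \<in> ?W. E v u}"
    using fin un by (metis finite_Un)+
  have "d = card {u. E v u}" using cr_basic(4)[OF cr vlt] by simp
  also have "\<dots> = card {u \<in> ?V. E v u} + card {u \<in> ?W. E v u}"
    unfolding un by (rule card_Un_disjoint[OF f1 dis])
  finally show ?thesis using other_b[OF cr i v] by simp
qed

lemma cluster_card: "i \<in> {1,2::nat} \<Longrightarrow> card (cluster n i) = n"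
  by (auto simp: cluster_def)

lemma finite_cluster: "finite (cluster n i)"
  by (simp add: cluster_def)

lemma sq_sum_le: "(x + y)^2 \<le> 2 * x^2 + 2 * (y::real)^2"
proof -
  have "0 \<le> (x - y)^2" by simp
  thus ?thesis by (simp add: power2_eq_square algebra_simps)
qed

lemma mu_bound:
  fixes x :: "nat \<Rightarrow> bool" and R :: bool
  assumes cr: "clustered_regular n d b E" and i: "i \<in> {1,2::nat}" and dpos: "d > 0"
  defines "V \<equiv> cluster n i"
  defines "m \<equiv> card {u \<in> V. x u \<noteq> R}"
  shows "(\<Sum>v\<in>V. pmf (node_update E x v) (\<not> R))
      \<le> 4 * real m ^ 2 / real d + 2 * real n * (real b / real d)^2 + 2 * real m * (real b / real d)"
proof -
  define W where "W = cluster n (3 - i)"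
  define G where "G v = card {u \<in> V. E v u \<and> x u \<noteq> R}" for v
  define bad where "bad v = (if x v \<noteq> R then 1 else 0 :: real)" for v
  define dd where "dd = real d"
  define \<beta> where "\<beta> = real b / dd"
  have ddpos: "dd > 0" using dpos unfolding dd_def by simp
  have finV: "finite V" unfolding V_def by (rule finite_cluster)
  have Vlt: "v \<in> V \<Longrightarrow> v < 2*n" for v using other_cluster(2)[OF i, of n] unfolding V_def by blast
  have Gm: "G v \<le> m" for v unfolding G_def m_def using finV by (intro card_mono) auto
  have bW: "card {u \<in> W. E v u} = b" if "v \<in> V" for v
    using other_b[OF cr i] that unfolding W_def V_def by blast
  have FG: "real (card {u. E v u \<and> x u \<noteq> R}) \<le> real (G v) + real b" if v: "v \<in> V" for v
  proof -
    have sub: "{u. E v u \<and> x u \<noteq> R} \<subseteq> {u \<in> V. E v u \<and> x u \<noteq> R} \<union> {u \<in> W. E v u}"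
      using cr_basic(2)[OF cr] other_cluster(2)[OF i, of n] unfolding W_def V_def by blast
    have "card {u. E v u \<and> x u \<noteq> R} \<le> card ({u \<in> V. E v u \<and> x u \<noteq> R} \<union> {u \<in> W. E v u})"
      by (rule card_mono[OF _ sub]) (use finV finite_cluster[of n "3 - i"] in \<open>auto simp: W_def\<close>)
    also have "\<dots> \<le> G v + card {u \<in> W. E v u}" unfolding G_def by (rule card_Un_le)
    finally show ?thesis using bW[OF v] by simp
  qed
  have qv: "pmf (node_update E x v) (\<not> R) \<le> 2 * real m * real (G v) / dd^2 + 2 * \<beta>^2 + bad v * (2 * (real m + real b) / dd)"
    if v: "v \<in> V" for v
  proof -
    have degv: "card {u. E v u} = d" using cr_basic(4)[OF cr Vlt[OF v]] .
    define F where "F = real (card {u. E v u \<and> x u \<noteq> R})"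
    have F0: "F \<ge> 0" unfolding F_def by simp
    have FG': "F \<le> real (G v) + real b" using FG[OF v] unfolding F_def .
    have Fm: "F \<le> real m + real b" using FG' Gm[of v] by linarith
    have "pmf (node_update E x v) (\<not> R) \<le> (F / dd)^2 + bad v * (2 * F / dd)"
      using node_update_bad[of E v x R, OF cr_finite_nbrs[OF cr]] degv dpos
      unfolding F_def dd_def bad_def by (auto split: if_splits)
    also have "(F / dd)^2 \<le> ((real (G v) + real b) / dd)^2"
      using F0 FG' ddpos by (intro power_mono divide_right_mono) auto
    also have "((real (G v) + real b) / dd)^2 \<le> 2 * (real (G v) / dd)^2 + 2 * \<beta>^2"
    proof -
      have "((real (G v) + real b) / dd)^2 = (real (G v) / dd + \<beta>)^2" unfolding \<beta>_def by (simp add: add_divide_distrib)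
      also have "\<dots> \<le> 2 * (real (G v) / dd)^2 + 2 * \<beta>^2"
        by (rule sq_sum_le)
      finally show ?thesis .
    qed
    also have "(real (G v) / dd)^2 \<le> real m * real (G v) / dd^2"
      using Gm[of v] ddpos by (simp add: power2_eq_square divide_right_mono mult_right_mono)
    also have "bad v * (2 * F / dd) \<le> bad v * (2 * (real m + real b) / dd)"
      using Fm ddpos unfolding bad_def by (auto simp: divide_right_mono)
    finally show ?thesis by (simp add: algebra_simps)
  qed
  have sumG: "(\<Sum>v\<in>V. real (G v)) \<le> real m * dd"
  proof -
    have "(\<Sum>v\<in>V. real (G v)) = (\<Sum>v\<in>V. \<Sum>u\<in>V. if E v u \<and> x u \<noteq> R then 1 else 0)"
      unfolding G_def using finV by (intro sum.cong refl) (simp add: sum.If_cases Int_def conj_commute)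
    also have "\<dots> = (\<Sum>u\<in>V. \<Sum>v\<in>V. if E v u \<and> x u \<noteq> R then 1 else 0)" by (rule sum.swap)
    also have "\<dots> \<le> (\<Sum>u\<in>V. if x u \<noteq> R then dd else 0)"
    proof (intro sum_mono)
      fix u assume u: "u \<in> V"
      have "(\<Sum>v\<in>V. if E v u \<and> x u \<noteq> R then 1 else 0 :: real) = (if x u \<noteq> R then real (card {v \<in> V. E v u}) else 0)"
        using finV by (simp add: sum.If_cases Int_def conj_commute)
      also have "card {v \<in> V. E v u} \<le> card {v. E u v}"
        by (rule card_mono[OF cr_finite_nbrs[OF cr]]) (use cr_basic(3)[OF cr] in auto)
      hence "real (card {v \<in> V. E v u}) \<le> dd" using cr_basic(4)[OF cr Vlt[OF u]] unfolding dd_def by simp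
      finally show "(\<Sum>v\<in>V. if E v u \<and> x u \<noteq> R then 1 else 0 :: real) \<le> (if x u \<noteq> R then dd else 0)"
        by (auto split: if_splits)
    qed
    also have "\<dots> = real m * dd" unfolding m_def using finV by (simp add: sum.If_cases Int_def conj_commute)
    finally show ?thesis .
  qed
  have sumbad: "(\<Sum>v\<in>V. bad v) = real m" unfolding bad_def m_def using finV by (simp add: sum.If_cases Int_def conj_commute)
  have cardV: "card V = n" unfolding V_def using cluster_card[OF i] .
  have "(\<Sum>v\<in>V. pmf (node_update E x v) (\<not> R)) \<le>
      (\<Sum>v\<in>V. 2 * real m * real (G v) / dd^2 + 2 * \<beta>^2 + bad v * (2 * (real m + real b) / dd))"
    by (intro sum_mono qv)
  also have "\<dots> = 2 * real m * (\<Sum>v\<in>V. real (G v)) / dd^2 + 2 * real n * \<beta>^2 + real m * (2 * (real m + real b) / dd)"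
  proof -
    have "(\<Sum>v\<in>V. 2 * real m * real (G v) / dd^2 + 2 * \<beta>^2 + bad v * (2 * (real m + real b) / dd))
      = (\<Sum>v\<in>V. 2 * real m * real (G v) / dd^2) + (\<Sum>v\<in>V. 2 * \<beta>^2) + (\<Sum>v\<in>V. bad v * (2 * (real m + real b) / dd))"
      by (simp only: sum.distrib)
    also have "(\<Sum>v\<in>V. 2 * real m * real (G v) / dd^2) = 2 * real m * (\<Sum>v\<in>V. real (G v)) / dd^2"
      by (simp only: sum_divide_distrib[symmetric] sum_distrib_left[symmetric])
    also have "(\<Sum>v\<in>V. 2 * \<beta>^2) = 2 * real n * \<beta>^2" using cardV by simp
    also have "(\<Sum>v\<in>V. bad v * (2 * (real m + real b) / dd)) = real m * (2 * (real m + real b) / dd)"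
      by (simp only: sum_distrib_right[symmetric] sumbad)
    finally show ?thesis .
  qed
  also have "\<dots> \<le> 2 * real m * (real m * dd) / dd^2 + 2 * real n * \<beta>^2 + real m * (2 * (real m + real b) / dd)"
    using sumG ddpos by (intro add_mono divide_right_mono mult_left_mono) auto
  also have "\<dots> = 4 * real m ^ 2 / dd + 2 * real n * \<beta>^2 + 2 * real m * \<beta>"
    using ddpos unfolding \<beta>_def by (simp add: field_simps power2_eq_square)
  finally show ?thesis unfolding dd_def \<beta>_def .
qed

lemma lambda_ge:
  assumes "i \<in> {1,2::nat}" "k \<in> {1, n - 1}"
  shows "\<bar>eigenvalues_desc (walk_matrix n d b E i) ! k\<bar> \<le> lambda_param n d b E"
proof -
  let ?S = "{\<bar>eigenvalues_desc (walk_matrix n d b E i) ! k\<bar> | i k. i \<in> {1,2::nat} \<and> k \<in> {1, n - 1}}"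
  have "?S \<subseteq> (\<lambda>(i,k). \<bar>eigenvalues_desc (walk_matrix n d b E i) ! k\<bar>) ` ({1,2::nat} \<times> {1, n - 1})"
    by auto
  hence fin: "finite ?S" by (rule finite_subset) auto
  have "\<bar>eigenvalues_desc (walk_matrix n d b E i) ! k\<bar> \<in> ?S" using assms by blast
  thus ?thesis unfolding lambda_param_def using fin by (rule Max_ge[rotated])
qed

lemma graph_spectral:
  assumes cr: "clustered_regular n d b E" and n2: "n \<ge> 2"
  shows "b \<le> d" "d - b \<ge> 1" "real n / real (d - b) \<le> 1 + real (n - 1) * (lambda_param n d b E)^2"
    "lambda_param n d b E \<ge> 0"
proof -
  have c1: "cluster n 1 = {0..<n}" by (simp add: cluster_def)
  have own: "card {u \<in> cluster n 1. E v u} + b = d" if "v < n" for v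
    using cr_own_deg[OF cr, of 1 v] that c1 by simp
  show bd: "b \<le> d" using own[of 0] n2 by simp
  have deg: "card {k. k < n \<and> E j k} = d - b" if "j < n" for j
  proof -
    have "{k. k < n \<and> E j k} = {u \<in> cluster n 1. E j u}" using c1 by auto
    thus ?thesis using own[OF that] by simp
  qed
  have "\<not> bipartite_on (cluster n 1) E" using cr_basic(7)[OF cr, of 1] by simp
  then obtain u v where uv: "u \<in> cluster n 1" "v \<in> cluster n 1" "E u v"
    unfolding bipartite_on_def by (metis (full_types))
  have "{k. k < n \<and> E u k} \<noteq> {}" using uv c1 by auto
  moreover have "finite {k. k < n \<and> E u k}" by simp
  ultimately have "card {k. k < n \<and> E u k} \<ge> 1" by (simp add: Suc_leI card_gt_0_iff)
  thus d1: "d - b \<ge> 1" using deg[of u] uv c1 by simp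
  have l1: "\<bar>eigenvalues_desc (walk_matrix n d b E 1) ! 1\<bar> \<le> lambda_param n d b E"
    by (rule lambda_ge) auto
  have l2: "\<bar>eigenvalues_desc (walk_matrix n d b E 1) ! (n - 1)\<bar> \<le> lambda_param n d b E"
    by (rule lambda_ge) auto
  show "lambda_param n d b E \<ge> 0" using l1 by linarith
  have W: "walk_matrix n d b E 1 = mat n n (\<lambda>(j,k). if E j k then 1 / real (d - b) else 0)"
    unfolding walk_matrix_def by simp
  show "real n / real (d - b) \<le> 1 + real (n - 1) * (lambda_param n d b E)^2"
  proof (rule spectral_degree_bound[OF n2 d1 _ deg W l1 l2])
    fix j k assume "j < n" "k < n"
    show "E j k = E k j" using cr_basic(3)[OF cr] by blast
  qed
qed

lemma one_step:
  fixes y :: "nat \<Rightarrow> bool" and Rf :: "nat \<Rightarrow> bool" and c1 L Kt :: real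
  assumes cr: "clustered_regular n d b E"
    and dL: "L^2 \<le> real d" and dpos: "d > 0"
    and bd: "real b / real d \<le> c1 * real n powr (-1/2)"
    and Lc1: "L * c1 * real n powr (-1/2) \<le> 1"
    and L1: "L > 1" and c1: "c1 > 0"
    and yA: "\<And>i. i \<in> {1,2} \<Longrightarrow> real (card {v \<in> cluster n i. y v \<noteq> Rf i}) \<le> L / 2"
  shows "measure_pmf.prob (two_choices_step n E y) {z. \<exists>i\<in>{1,2::nat}. real (card {v \<in> cluster n i. z v \<noteq> Rf i}) > Kt}
      \<le> 2 * (exp (L * (2 * c1^2 + 2)) / L powr Kt)"
proof -
  have n0: "n > 0" using cr_basic(1)[OF cr] .
  have each: "measure_pmf.prob (two_choices_step n E y) {z. real (card {v \<in> cluster n i. z v \<noteq> Rf i}) > Kt}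
      \<le> exp (L * (2 * c1^2 + 2)) / L powr Kt" if i: "i \<in> {1,2::nat}" for i
  proof -
    define m where "m = card {v \<in> cluster n i. y v \<noteq> Rf i}"
    have m: "real m \<le> L / 2" using yA[OF i] unfolding m_def .
    have m0: "real m \<ge> 0" by simp
    have mu: "(\<Sum>v\<in>cluster n i. pmf (node_update E y v) (\<not> Rf i))
      \<le> 4 * real m ^ 2 / real d + 2 * real n * (real b / real d)^2 + 2 * real m * (real b / real d)"
      unfolding m_def by (rule mu_bound[OF cr i dpos])
    have t1: "4 * real m ^ 2 / real d \<le> 1"
    proof -
      have "(2 * real m)^2 \<le> L^2" by (rule power_mono) (use m m0 in auto)
      hence "4 * real m ^ 2 \<le> L^2" by (simp add: power_mult_distrib)
      also have "\<dots> \<le> real d" by (rule dL)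
      finally show ?thesis using dpos by simp
    qed
    have b0: "real b / real d \<ge> 0" by simp
    have t2: "2 * real n * (real b / real d)^2 \<le> 2 * c1^2"
    proof -
      have "(real b / real d)^2 \<le> (c1 * real n powr (-1/2))^2" using b0 bd by (intro power_mono) auto
      also have "\<dots> = c1^2 / real n"
      proof -
        have "(real n powr (-1/2))^2 = real n powr (-1/2) * real n powr (-1/2)" by (simp add: power2_eq_square)
        also have "\<dots> = real n powr (-1)" using n0 by (simp add: powr_add[symmetric])
        also have "\<dots> = 1 / real n" using n0 by (simp add: powr_minus_divide)
        finally show ?thesis by (simp add: power_mult_distrib)
      qed
      finally have "(real b / real d)^2 \<le> c1^2 / real n" .
      hence "real n * (real b / real d)^2 \<le> c1^2" using n0 by (simp add: field_simps)
      thus ?thesis by simp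
    qed
    have t3: "2 * real m * (real b / real d) \<le> 1"
    proof -
      have "2 * real m * (real b / real d) \<le> L * (c1 * real n powr (-1/2))"
        using m m0 b0 bd L1 by (intro mult_mono) auto
      thus ?thesis using Lc1 by (simp add: mult.assoc)
    qed
    have mu0: "(\<Sum>v\<in>cluster n i. pmf (node_update E y v) (\<not> Rf i)) \<le> 2 * c1^2 + 2"
      using mu t1 t2 t3 by linarith
    have "measure_pmf.prob (two_choices_step n E y) {z. real (card {v \<in> cluster n i. z v \<noteq> Rf i}) > Kt}
      \<le> exp ((L - 1) * (\<Sum>v\<in>cluster n i. pmf (node_update E y v) (\<not> Rf i))) / L powr Kt"
    proof -
      have "cluster n i \<subseteq> {..<2*n}" using other_cluster(2)[OF i, of n] by blast
      hence sub: "cluster n i \<subseteq> {0..<2*n}" by (simp only: lessThan_atLeast0)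
      show ?thesis unfolding two_choices_step_def
        by (rule chernoff_count[where I="{0..<2*n}" and V="cluster n i", OF _ sub L1]) simp
    qed
    also have "\<dots> \<le> exp (L * (2 * c1^2 + 2)) / L powr Kt"
    proof (intro divide_right_mono)
      have s0: "(\<Sum>v\<in>cluster n i. pmf (node_update E y v) (\<not> Rf i)) \<ge> 0" by (simp add: sum_nonneg)
      have "(L - 1) * (\<Sum>v\<in>cluster n i. pmf (node_update E y v) (\<not> Rf i)) \<le> L * (2 * c1^2 + 2)"
        using mu0 s0 L1 by (intro mult_mono) auto
      thus "exp ((L - 1) * (\<Sum>v\<in>cluster n i. pmf (node_update E y v) (\<not> Rf i))) \<le> exp (L * (2 * c1^2 + 2))"
        by simp
    qed simp
    finally show ?thesis .
  qed
  have "{z. \<exists>i\<in>{1,2::nat}. real (card {v \<in> cluster n i. z v \<noteq> Rf i}) > Kt} =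
    {z. real (card {v \<in> cluster n 1. z v \<noteq> Rf 1}) > Kt} \<union> {z. real (card {v \<in> cluster n 2. z v \<noteq> Rf 2}) > Kt}"
    by auto
  hence "measure_pmf.prob (two_choices_step n E y) {z. \<exists>i\<in>{1,2::nat}. real (card {v \<in> cluster n i. z v \<noteq> Rf i}) > Kt}
    \<le> measure_pmf.prob (two_choices_step n E y) {z. real (card {v \<in> cluster n 1. z v \<noteq> Rf 1}) > Kt}
     + measure_pmf.prob (two_choices_step n E y) {z. real (card {v \<in> cluster n 2. z v \<noteq> Rf 2}) > Kt}"
    by (simp add: measure_Un_le)
  also have "\<dots> \<le> 2 * (exp (L * (2 * c1^2 + 2)) / L powr Kt)"
    using each[of 1] each[of 2] by simp
  finally show ?thesis .
qed

lemma bias_bad: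
  assumes i: "i \<in> {1,2::nat}"
  shows "bias (cluster n i) y = (if R then real n - 2 * real (card {v \<in> cluster n i. y v \<noteq> R})
                                 else 2 * real (card {v \<in> cluster n i. y v \<noteq> R}) - real n)"
proof -
  have fin: "finite (cluster n i)" by (rule finite_cluster)
  have "card {v \<in> cluster n i. y v} + card {v \<in> cluster n i. \<not> y v} = card (cluster n i)"
  proof -
    have "{v \<in> cluster n i. y v} \<union> {v \<in> cluster n i. \<not> y v} = cluster n i" by blast
    moreover have "{v \<in> cluster n i. y v} \<inter> {v \<in> cluster n i. \<not> y v} = {}" by blast
    ultimately show ?thesis using fin by (metis (no_types, lifting) card_Un_disjoint finite_Un)
  qed
  hence s: "real (card {v \<in> cluster n i. y v}) + real (card {v \<in> cluster n i. \<not> y v}) = real n"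
    using cluster_card[OF i] by (metis of_nat_add)
  show ?thesis unfolding bias_def using s by (cases R) auto
qed

lemma main_bound:
  fixes c1 c2 C :: real and c :: nat
  assumes cr: "clustered_regular n d b E" and n3: "n \<ge> 3"
    and bd: "real b / real d \<le> c1 * real n powr (-1/2)"
    and lam: "lambda_param n d b E \<le> c2 * real n powr (-1/4)"
    and c1: "c1 > 0" and c2: "c2 > 0"
    and x0: "\<forall>i \<in> {1,2::nat}. \<bar>bias (cluster n i) x0\<bar> \<ge> real n - ln (real n)"
    and A2: "ln (ln (real n)) \<ge> C" and C0: "C > 0"
    and A3: "ln (real n)^2 * (1 + c2^2 * real n powr (1/2)) \<le> real n"
    and A4: "ln (real n) * c1 * real n powr (-1/2) \<le> 1"
    and Cdef: "C = 2 * ((2 * c1^2 + 2) + real c + 1)"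
  shows "measure_pmf.prob (two_choices_run n E (n ^ c) x0)
         {xs. \<forall>x \<in> set xs. \<forall>i \<in> {1,2::nat}.
                \<bar>bias (cluster n i) x\<bar> \<ge> real n - C * ln (real n) / ln (ln (real n)) \<and>
                sgn (bias (cluster n i) x) = sgn (bias (cluster n i) x0)}
       \<ge> 1 - 2 * real n powr (-1)"
proof -
  define L where "L = ln (real n)"
  define \<mu>0 where "\<mu>0 = 2 * c1^2 + 2"
  have npos: "real n > 0" using n3 by simp
  have L1: "L > 1"
  proof -
    have "exp 1 < real n" using e_less_272 n3 by linarith
    hence "ln (exp 1) < ln (real n)" using npos by (subst ln_less_cancel_iff) auto
    thus ?thesis unfolding L_def by simp
  qed
  have L0: "L > 0" using L1 by simp
  have n2: "n \<ge> 2" using n3 by simp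
  note gs = graph_spectral[OF cr n2]
  define lam where "lam = lambda_param n d b E"
  have lam0: "lam \<ge> 0" using gs(4) unfolding lam_def .
  have lam2: "lam^2 \<le> c2^2 * real n powr (-1/2)"
  proof -
    have "lam^2 \<le> (c2 * real n powr (-1/4))^2" using lam lam0 unfolding lam_def by (intro power_mono) auto
    also have "(c2 * real n powr (-1/4))^2 = c2^2 * real n powr (-1/2)"
    proof -
      have "(real n powr (-1/4))^2 = real n powr (-1/4) * real n powr (-1/4)" by (simp add: power2_eq_square)
      also have "\<dots> = real n powr (-1/2)" using npos by (simp add: powr_add[symmetric])
      finally show ?thesis by (simp add: power_mult_distrib)
    qed
    finally show ?thesis .
  qed
  define Q where "Q = 1 + c2^2 * real n powr (1/2)"
  have Q0: "Q > 0" unfolding Q_def using c2 by (simp add: add_pos_nonneg)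
  have db1: "d - b \<ge> 1" by (rule gs(2))
  have nQ: "real n / real (d - b) \<le> Q"
  proof -
    have "real (n - 1) * lam^2 \<le> real n * (c2^2 * real n powr (-1/2))"
      using lam2 lam0 by (intro mult_mono) auto
    also have "real n * (c2^2 * real n powr (-1/2)) = c2^2 * real n powr (1/2)"
    proof -
      have "real n powr 1 * real n powr (-1/2) = real n powr (1 + (-1/2))" by (rule powr_add[symmetric])
      hence "real n * real n powr (-1/2) = real n powr (1/2)" using npos by simp
      thus ?thesis by (simp add: algebra_simps)
    qed
    finally have "1 + real (n - 1) * lam^2 \<le> Q" unfolding Q_def by (rule add_left_mono)
    with gs(3) show ?thesis unfolding lam_def by (rule order_trans)
  qed
  have dL: "L^2 \<le> real d"
  proof -
    have dbpos: "real (d - b) > 0" using db1 by simp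
    have "real n \<le> Q * real (d - b)" using nQ dbpos by (simp add: divide_le_eq mult.commute)
    hence "L^2 * Q \<le> Q * real (d - b)" using A3 unfolding L_def Q_def by (simp add: mult.commute)
    hence "L^2 \<le> real (d - b)" using Q0 by (simp add: mult.commute)
    also have "real (d - b) \<le> real d" by simp
    finally show ?thesis .
  qed
  have dpos: "d > 0" using db1 by simp
  define Rf where "Rf i = (bias (cluster n i) x0 > 0)" for i :: nat
  define bad where "bad i y = card {v \<in> cluster n i. y v \<noteq> Rf i}" for i :: nat and y :: "nat \<Rightarrow> bool"
  define Kt where "Kt = C * L / (2 * ln L)"
  have lnL: "ln L \<ge> C" using A2 unfolding L_def .
  have lnL0: "ln L > 0" using lnL C0 by simp
  have Kt_le: "Kt \<le> L / 2"
  proof -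
    have "C * L \<le> ln L * L" using lnL L0 by (intro mult_right_mono) auto
    thus ?thesis unfolding Kt_def using lnL0 by (simp add: field_simps)
  qed
  define Aset where "Aset = {y. \<forall>i\<in>{1,2::nat}. real (bad i y) \<le> L / 2}"
  define Bset where "Bset = {y. \<forall>i\<in>{1,2::nat}. real (bad i y) \<le> Kt}"
  have BA: "Bset \<subseteq> Aset" unfolding Aset_def Bset_def using Kt_le by auto
  have Lltn: "L < real n" unfolding L_def using npos by (rule ln_less_self)
  have x0A: "x0 \<in> Aset" unfolding Aset_def
  proof (intro CollectI ballI)
    fix i :: nat assume i: "i \<in> {1,2}"
    have ab: "\<bar>bias (cluster n i) x0\<bar> \<ge> real n - L" using x0 i unfolding L_def by blast
    have be: "bias (cluster n i) x0 = (if Rf i then real n - 2 * real (bad i x0) else 2 * real (bad i x0) - real n)"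
      unfolding bad_def by (rule bias_bad[OF i])
    show "real (bad i x0) \<le> L / 2"
    proof (cases "Rf i")
      case True
      hence "bias (cluster n i) x0 > 0" unfolding Rf_def .
      thus ?thesis using ab be True by auto
    next
      case False
      hence "bias (cluster n i) x0 \<le> 0" unfolding Rf_def by simp
      thus ?thesis using ab be False Lltn by auto
    qed
  qed
  define p where "p = 2 * (exp (L * \<mu>0) / L powr Kt)"
  have p0: "p \<ge> 0" unfolding p_def by simp
  have stepb: "measure_pmf.prob (two_choices_step n E y) (- Bset) \<le> p" if yA: "y \<in> Aset" for y
  proof -
    have "- Bset = {z. \<exists>i\<in>{1,2::nat}. real (card {v \<in> cluster n i. z v \<noteq> Rf i}) > Kt}"
      unfolding Bset_def bad_def by auto
    moreover have "measure_pmf.prob (two_choices_step n E y) {z. \<exists>i\<in>{1,2::nat}. real (card {v \<in> cluster n i. z v \<noteq> Rf i}) > Kt} \<le> p"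
      unfolding p_def \<mu>0_def
    proof (rule one_step[OF cr dL dpos bd _ L1 c1])
      show "L * c1 * real n powr (-1/2) \<le> 1" using A4 unfolding L_def .
      fix i :: nat assume "i \<in> {1,2}"
      thus "real (card {v \<in> cluster n i. y v \<noteq> Rf i}) \<le> L / 2" using yA unfolding Aset_def bad_def by blast
    qed
    ultimately show ?thesis by simp
  qed
  have runb: "measure_pmf.prob (two_choices_run n E (n ^ c) x0) {xs. \<exists>y\<in>set xs. y \<notin> Bset} \<le> real (n ^ c) * p"
    by (rule run_bound[OF BA p0 stepb x0A])
  have pval: "real (n ^ c) * p = 2 * real n powr (-1)"
  proof -
    have e1: "exp (L * \<mu>0) = real n powr \<mu>0" unfolding L_def using npos by (simp add: powr_def mult.commute)
    have e2: "L powr Kt = real n powr (C / 2)"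
    proof -
      have "L powr Kt = exp (Kt * ln L)" using L0 by (simp add: powr_def)
      also have "Kt * ln L = C / 2 * L" unfolding Kt_def using lnL0 by (simp add: field_simps)
      also have "exp (C / 2 * L) = real n powr (C / 2)" unfolding L_def using npos by (simp add: powr_def)
      finally show ?thesis .
    qed
    have "real (n ^ c) * p = 2 * (real n powr real c * (real n powr \<mu>0 / real n powr (C / 2)))"
      unfolding p_def e1 e2 using npos by (simp add: powr_realpow)
    also have "real n powr real c * (real n powr \<mu>0 / real n powr (C / 2)) = real n powr (real c + \<mu>0 - C / 2)"
      using npos by (simp add: powr_diff powr_add)
    also have "real c + \<mu>0 - C / 2 = -1" unfolding Cdef \<mu>0_def by (simp add: field_simps)
    finally show ?thesis .
  qed
  have sub: "{xs. \<forall>x\<in>set xs. x \<in> Bset} \<subseteq>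
         {xs. \<forall>x \<in> set xs. \<forall>i \<in> {1,2::nat}.
                \<bar>bias (cluster n i) x\<bar> \<ge> real n - C * ln (real n) / ln (ln (real n)) \<and>
                sgn (bias (cluster n i) x) = sgn (bias (cluster n i) x0)}"
  proof (intro subsetI CollectI ballI conjI; elim CollectE)
    fix xs x i assume allB: "\<forall>x\<in>set xs. x \<in> Bset" and x: "x \<in> set xs" and i: "i \<in> {1,2::nat}"
    have xb: "real (bad i x) \<le> Kt" using allB x i unfolding Bset_def by blast
    have twoK: "2 * Kt = C * ln (real n) / ln (ln (real n))" unfolding Kt_def L_def by simp
    have twoK_lt: "2 * Kt < real n" using Kt_le Lltn by linarith
    have be: "bias (cluster n i) x = (if Rf i then real n - 2 * real (bad i x) else 2 * real (bad i x) - real n)"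
      unfolding bad_def by (rule bias_bad[OF i])
    have ab0: "\<bar>bias (cluster n i) x0\<bar> \<ge> real n - L" using x0 i unfolding L_def by blast
    have b0ne: "bias (cluster n i) x0 \<noteq> 0" using ab0 Lltn by auto
    show "\<bar>bias (cluster n i) x\<bar> \<ge> real n - C * ln (real n) / ln (ln (real n))"
      using be xb twoK twoK_lt by (cases "Rf i") auto
    show "sgn (bias (cluster n i) x) = sgn (bias (cluster n i) x0)"
    proof (cases "Rf i")
      case True
      hence "bias (cluster n i) x0 > 0" unfolding Rf_def .
      moreover have "bias (cluster n i) x > 0" using be xb twoK_lt True by auto
      ultimately show ?thesis by simp
    next
      case False
      hence "bias (cluster n i) x0 < 0" using b0ne unfolding Rf_def by simp
      moreover have "bias (cluster n i) x < 0" using be xb twoK_lt False by auto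
      ultimately show ?thesis by simp
    qed
  qed
  have "{xs. \<forall>x\<in>set xs. x \<in> Bset} = - {xs. \<exists>y\<in>set xs. y \<notin> Bset}" by auto
  hence "measure_pmf.prob (two_choices_run n E (n ^ c) x0) {xs. \<forall>x\<in>set xs. x \<in> Bset}
      = 1 - measure_pmf.prob (two_choices_run n E (n ^ c) x0) {xs. \<exists>y\<in>set xs. y \<notin> Bset}"
  proof -
    let ?M = "two_choices_run n E (n ^ c) x0" and ?X = "{xs. \<exists>y\<in>set xs. y \<notin> Bset}"
    have "measure_pmf.prob ?M (space (measure_pmf ?M) - ?X) = 1 - measure_pmf.prob ?M ?X"
      by (rule measure_pmf.prob_compl) simp
    thus ?thesis using \<open>{xs. \<forall>x\<in>set xs. x \<in> Bset} = - ?X\<close> by (simp add: Compl_eq_Diff_UNIV)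
  qed
  hence "measure_pmf.prob (two_choices_run n E (n ^ c) x0) {xs. \<forall>x\<in>set xs. x \<in> Bset} \<ge> 1 - 2 * real n powr (-1)"
    using runb pval by simp
  moreover have "measure_pmf.prob (two_choices_run n E (n ^ c) x0) {xs. \<forall>x\<in>set xs. x \<in> Bset} \<le>
      measure_pmf.prob (two_choices_run n E (n ^ c) x0) {xs. \<forall>x \<in> set xs. \<forall>i \<in> {1,2::nat}.
                \<bar>bias (cluster n i) x\<bar> \<ge> real n - C * ln (real n) / ln (ln (real n)) \<and>
                sgn (bias (cluster n i) x) = sgn (bias (cluster n i) x0)}"
    by (rule measure_pmf.finite_measure_mono[OF sub]) simp
  ultimately show ?thesis by linarith
qed

theorem lemma6:
  fixes c1 c2 :: real and c :: nat
  assumes "c1 > 0" and "c2 > 0"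
  shows "\<exists>C K \<gamma> :: real. C > 0 \<and> K > 0 \<and> \<gamma> > 0 \<and> (\<exists>N0::nat. \<forall>n \<ge> N0.
     \<forall>d b E (x0 :: nat \<Rightarrow> bool).
       clustered_regular n d b E \<and>
       real b / real d \<le> c1 * real n powr (-1/2) \<and>
       lambda_param n d b E \<le> c2 * real n powr (-1/4) \<and>
       (\<forall>i \<in> {1,2::nat}. \<bar>bias (cluster n i) x0\<bar> \<ge> real n - ln (real n))
     \<longrightarrow>
       measure_pmf.prob (two_choices_run n E (n ^ c) x0)
         {xs. \<forall>x \<in> set xs. \<forall>i \<in> {1,2::nat}.
                \<bar>bias (cluster n i) x\<bar> \<ge> real n - C * ln (real n) / ln (ln (real n)) \<and>
                sgn (bias (cluster n i) x) = sgn (bias (cluster n i) x0)}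
       \<ge> 1 - K * real n powr (-\<gamma>))"
proof -
  define C where "C = 2 * ((2 * c1^2 + 2) + real c + 1)"
  have C0: "C > 0" unfolding C_def by (simp add: add_pos_nonneg)
  have e1: "eventually (\<lambda>n::nat. n \<ge> 3) sequentially" by (rule eventually_ge_at_top)
  have "filterlim (\<lambda>n::nat. ln (ln (real n))) at_top sequentially" by real_asymp
  hence e2: "eventually (\<lambda>n::nat. C \<le> ln (ln (real n))) sequentially"
    unfolding filterlim_at_top by blast
  have "((\<lambda>n::nat. ln (real n)^2 * (1 + c2^2 * real n powr (1/2)) / real n) \<longlongrightarrow> 0) sequentially"
    by real_asymp
  hence e3: "eventually (\<lambda>n::nat. ln (real n)^2 * (1 + c2^2 * real n powr (1/2)) / real n < 1) sequentially"
    by (rule order_tendstoD) simp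
  have "((\<lambda>n::nat. ln (real n) * c1 * real n powr (-1/2)) \<longlongrightarrow> 0) sequentially"
    by real_asymp
  hence e4: "eventually (\<lambda>n::nat. ln (real n) * c1 * real n powr (-1/2) < 1) sequentially"
    by (rule order_tendstoD) simp
  have "eventually (\<lambda>n::nat. n \<ge> 3 \<and> C \<le> ln (ln (real n)) \<and>
     ln (real n)^2 * (1 + c2^2 * real n powr (1/2)) / real n < 1 \<and>
     ln (real n) * c1 * real n powr (-1/2) < 1) sequentially"
    using e1 e2 e3 e4 by eventually_elim auto
  then obtain N0 where N0: "\<And>n. n \<ge> N0 \<Longrightarrow> n \<ge> 3 \<and> C \<le> ln (ln (real n)) \<and>
     ln (real n)^2 * (1 + c2^2 * real n powr (1/2)) / real n < 1 \<and>
     ln (real n) * c1 * real n powr (-1/2) < 1"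
    unfolding eventually_sequentially by blast
  have main: "\<forall>n \<ge> N0.
     \<forall>d b E (x0 :: nat \<Rightarrow> bool).
       clustered_regular n d b E \<and>
       real b / real d \<le> c1 * real n powr (-1/2) \<and>
       lambda_param n d b E \<le> c2 * real n powr (-1/4) \<and>
       (\<forall>i \<in> {1,2::nat}. \<bar>bias (cluster n i) x0\<bar> \<ge> real n - ln (real n))
     \<longrightarrow>
       measure_pmf.prob (two_choices_run n E (n ^ c) x0)
         {xs. \<forall>x \<in> set xs. \<forall>i \<in> {1,2::nat}.
                \<bar>bias (cluster n i) x\<bar> \<ge> real n - C * ln (real n) / ln (ln (real n)) \<and>
                sgn (bias (cluster n i) x) = sgn (bias (cluster n i) x0)}
       \<ge> 1 - 2 * real n powr (-1)"
  proof (intro allI impI)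
    fix n d b E and x0 :: "nat \<Rightarrow> bool"
    assume n: "n \<ge> N0"
    assume h: "clustered_regular n d b E \<and>
       real b / real d \<le> c1 * real n powr (-1/2) \<and>
       lambda_param n d b E \<le> c2 * real n powr (-1/4) \<and>
       (\<forall>i \<in> {1,2::nat}. \<bar>bias (cluster n i) x0\<bar> \<ge> real n - ln (real n))"
    from N0[OF n] have n3: "n \<ge> 3" and A2: "C \<le> ln (ln (real n))"
      and A3': "ln (real n)^2 * (1 + c2^2 * real n powr (1/2)) / real n < 1"
      and A4: "ln (real n) * c1 * real n powr (-1/2) < 1" by auto
    have npos: "real n > 0" using n3 by simp
    have A3: "ln (real n)^2 * (1 + c2^2 * real n powr (1/2)) \<le> real n"
      using A3' npos by (simp add: divide_less_eq)
    show "measure_pmf.prob (two_choices_run n E (n ^ c) x0)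
         {xs. \<forall>x \<in> set xs. \<forall>i \<in> {1,2::nat}.
                \<bar>bias (cluster n i) x\<bar> \<ge> real n - C * ln (real n) / ln (ln (real n)) \<and>
                sgn (bias (cluster n i) x) = sgn (bias (cluster n i) x0)}
       \<ge> 1 - 2 * real n powr (-1)"
      using main_bound[of n d b E c1 c2 x0 C c] h n3 A2 A3 A4 C0 assms unfolding C_def by auto
  qed
  show ?thesis
    by (rule exI[of _ C], rule exI[of _ 2], rule exI[of _ 1]) (use C0 main in auto)
qed

end
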